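(* Let $\langle\mathcal{P},\mathcal{S}\rangle$ be an ADP problem, let $\alpha\in\mathcal{S}$, and let $\mathrm{Pre}(\alpha)$ be the set of all ADPs $\beta\in\mathcal{P}$ such that the $\mathcal{P}$-dependency graph has an edge from some node in $\mathrm{dp}^\bot(\beta)$ to some node in $\mathrm{dp}^\bot(\alpha)$. If $\mathrm{Pre}(\alpha)\cap\mathcal{S}=\emptyset$, then the processor $\mathrm{Proc}_{\mathtt{KP}}(\langle\mathcal{P},\mathcal{S}\rangle)=(\mathrm{Pol}_0,\{\langle\mathcal{P},\mathcal{S}\setminus\{\alpha\}\rangle\})$ is sound.
   Context: Annotated dependency pairs (ADPs): over a finite signature $\Sigma$ with fresh annotated copies $f^\sharp$ of the defined symbols, an ADP is $\ell\to\{p_1:r_1,\dots,p_k:r_k\}^m$ with $\ell$ a non-variable unannotated term, $r_j$ possibly annotated, $\mathcal{V}(r_j)\subseteq\mathcal{V}(\ell)$, $0<p_j\le1$, $\sum p_j=1$, flag $m\in\{\mathsf{true},\mathsf{false}\}$. For a set $\mathcal{P}$, defined symbols are roots of left-hand sides; basic terms are $f(t_1,\dots,t_k)$ with $f$ defined, $t_i$ free of defined symbols; $|t|$ term size; $\flat$ removes annotations; $t^\sharp$ annotates the root; $\flat^\uparrow_\pi$ removes annotations strictly above $\pi$; $t\trianglelefteq_\sharp s$ means $t=\flat(s|_\pi)$ for a position $\pi$ of $s$ carrying an annotated symbol. Rewriting with $\mathcal{P}$ (innermost): at a position $\pi$ with defined or annotated symbol, ADP $\ell\to\{p_j:r_j\}^m\in\mathcal{P}$,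 $\sigma$ with $\flat(s|_\pi)=\ell\sigma$ whose proper subterms are normal forms: $t_j=s[r_j\sigma]_\pi$ (at: $m=\mathsf{true}$, $\pi$ annotated), $s[\flat(r_j)\sigma]_\pi$ (nt), $\flat^\uparrow_\pi(s[r_j\sigma]_\pi)$ (af), $\flat^\uparrow_\pi(s[\flat(r_j)\sigma]_\pi)$ (nf). A term is in argument normal form w.r.t. $\mathcal{P}$ if all its proper subterms are normal forms. $\mathcal{P}$-chain trees: possibly infinite finitely-branching trees with nodes $(p_v:t_v)$, root probability 1, $t_v$ rewriting to $\{\tfrac{p_w}{p_v}:t_w\}_w$ at inner nodes. For $\mathcal{S}\subseteq\mathcal{P}$, $\operatorname{edl}_{\langle\mathcal{P},\mathcal{S}\rangle}(\mathfrak{T})$ sums $p_v$ over inner nodes rewritten by (at)/(af)-steps with ADPs in $\mathcal{S}$; $\operatorname{edh}_{\langle\mathcal{P},\mathcal{S}\rangle}(t)$ = sup over chain trees rooted at $t^\sharp$; $\iota_{\langle\mathcal{P},\mathcal{S}\rangle}=\iota(n\mapsto\sup\{\operatorname{edh}_{\langle\mathcal{P},\mathcal{S}\rangle}(t)\mid t\text{ basic},|t|\le n\})$; complexities $\mathfrak{C}=\{\mathrm{Pol}_0,\mathrm{Pol}_1,\dots,\mathrm{Exp},\mathrm{2\text{-}Exp},\mathrm{Fin},\omega\}$ ordered in that order, $\oplus$ = maximum, $\iota(f)=\mathrm{Pol}_a$ for least $a$ with $f\in O(n^a)$, else $\mathrm{Exp}$ if $f\in O(2^{\mathrm{pol}(n)})$,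 else $\mathrm{2\text{-}Exp}$ if $f\in O(2^{2^{\mathrm{pol}(n)}})$, else $\mathrm{Fin}$ if $f$ never equals $\omega$, else $\omega$. Dependency graph: $\mathrm{np}(\mathcal{P})=\{\ell\to\flat(r_j)\mid\ell\to\{p_1:r_1,\dots,p_k:r_k\}^{\mathsf{true}}\in\mathcal{P}\}$. For $\alpha=\ell\to\{p_1:r_1,\dots,p_k:r_k\}^m$: $\mathrm{dp}(\alpha)=\{\ell^\sharp\to t^\sharp\mid1\le j\le k,t\trianglelefteq_\sharp r_j\}$; $\mathrm{dp}^\bot(\alpha)=\{\ell^\sharp\to\bot\}$ (fresh $\bot$) if $\mathrm{dp}(\alpha)=\emptyset$, else $\mathrm{dp}(\alpha)$; $\mathrm{dp}(\mathcal{P})=\bigcup_{\alpha\in\mathcal{P}}\mathrm{dp}^\bot(\alpha)$. The $\mathcal{P}$-dependency graph has nodes $\mathrm{dp}(\mathcal{P})$ and an edge from $\ell_1^\sharp\to t_1^\sharp$ to $\ell_2^\sharp\to\dots$ iff there are substitutions $\sigma_1,\sigma_2$ such that $t_1^\sharp\sigma_1$ reduces in zero or more innermost $\mathrm{np}(\mathcal{P})$-steps to $\ell_2^\sharp\sigma_2$ and $\ell_1^\sharp\sigma_1,\ell_2^\sharp\sigma_2$ are in argument normal form w.r.t. $\mathcal{P}$. ADP problems, proof trees, soundness: ADP problem $\langle\mathcal{P},\mathcal{S}\rangle$, $\mathcal{P}$ finite, $\mathcal{S}\subseteq\mathcal{P}$, solved iff $\mathcal{S}=\emptyset$. A processor maps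 an ADP problem to $(c,\{\langle\mathcal{P}_1,\mathcal{S}_1\rangle,\dots,\langle\mathcal{P}_n,\mathcal{S}_n\rangle\})$. A proof tree is a finite tree with labels $L_{\mathcal{A}}$ (ADP problems), $L_{\mathcal{C}}$ (complexities) where each inner node and its children arise by a processor application and leaves carry $\mathrm{Pol}_0$ if solved, $\omega$ otherwise; it is well formed if for each node $v$ with $L_{\mathcal{A}}(v)=\langle\mathcal{P},\mathcal{S}\rangle$ and root path $v_1,\dots,v_k=v$: $\iota_{\langle\mathcal{P},\mathcal{S}\rangle}\sqsubseteq L_{\mathcal{C}}(v_1)\oplus\dots\oplus L_{\mathcal{C}}(v_{k-1})\oplus\max\{L'_{\mathcal{C}}(w)\mid w$ reachable from $v$, incl. $v\}$ and $\iota_{\langle\mathcal{P},\mathcal{P}\setminus\mathcal{S}\rangle}\sqsubseteq L_{\mathcal{C}}(v_1)\oplus\dots\oplus L_{\mathcal{C}}(v_{k-1})$ ($L'_{\mathcal{C}}=L_{\mathcal{C}}$ on inner nodes, $\iota_{L_{\mathcal{A}}(w)}$ on leaves). A processor with output $(c,\{\langle\mathcal{P}_i,\mathcal{S}_i\rangle\}_{i\le n})$ on $\langle\mathcal{P},\mathcal{S}\rangle$ is sound if for every well-formed proof tree and node $v$ labeled $\langle\mathcal{P},\mathcal{S}\rangle$ with root path $v_1,\dots,v_k=v$: $\iota_{\langle\mathcal{P},\mathcal{S}\rangle}\sqsubseteq L_{\mathcal{C}}(v_1)\oplus\dots\oplus L_{\mathcal{C}}(v_{k-1})\oplus c\oplus\iota_{\langle\mathcal{P}_1,\mathcal{S}_1\rangle}\oplus\dots\oplus\iota_{\langle\mathcal{P}_n,\mathcal{S}_n\rangle}$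 and $\iota_{\langle\mathcal{P}_i,\mathcal{P}_i\setminus\mathcal{S}_i\rangle}\sqsubseteq L_{\mathcal{C}}(v_1)\oplus\dots\oplus L_{\mathcal{C}}(v_{k-1})\oplus c$ for all $i$. *)

theory Defs
  imports "HOL-Analysis.Infinite_Sum" "HOL-Library.Extended_Nonnegative_Real"
begin

text \<open>A term over function symbols 'f and variables 'v.  The boolean flag of a
  function node records whether the symbol is the annotated copy f-sharp (True)
  or the plain symbol f (False).\<close>

datatype ('f,'v) trm = Var 'v | Fun 'f bool "('f,'v) trm list"

type_synonym ('f,'v) subst = "'v \<Rightarrow> ('f,'v) trm"

fun flat :: "('f,'v) trm \<Rightarrow> ('f,'v) trm" where
  "flat (Var x) = Var x"
| "flat (Fun f b ts) = Fun f False (map flat ts)"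

fun sharp :: "('f,'v) trm \<Rightarrow> ('f,'v) trm" where
  "sharp (Var x) = Var x"
| "sharp (Fun f b ts) = Fun f True ts"

fun subst_apply :: "('f,'v) trm \<Rightarrow> ('f,'v) subst \<Rightarrow> ('f,'v) trm" (infixl "\<cdot>" 67) where
  "Var x \<cdot> \<sigma> = \<sigma> x"
| "Fun f b ts \<cdot> \<sigma> = Fun f b (map (\<lambda>t. t \<cdot> \<sigma>) ts)"

fun vars :: "('f,'v) trm \<Rightarrow> 'v set" where
  "vars (Var x) = {x}"
| "vars (Fun f b ts) = (\<Union>t\<in>set ts. vars t)"

fun tsize :: "('f,'v) trm \<Rightarrow> nat" where
  "tsize (Var x) = 1"
| "tsize (Fun f b ts) = Suc (sum_list (map tsize ts))"

fun funs :: "('f,'v) trm \<Rightarrow> ('f \<times> nat) set" where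
  "funs (Var x) = {}"
| "funs (Fun f b ts) = insert (f, length ts) (\<Union>t\<in>set ts. funs t)"

fun annot_funs :: "('f,'v) trm \<Rightarrow> ('f \<times> nat) set" where
  "annot_funs (Var x) = {}"
| "annot_funs (Fun f b ts) = (if b then {(f, length ts)} else {}) \<union> (\<Union>t\<in>set ts. annot_funs t)"

text \<open>Term over the signature (the annotated copy of f has the arity of f).\<close>
fun wf_trm :: "('f \<times> nat) set \<Rightarrow> ('f,'v) trm \<Rightarrow> bool" where
  "wf_trm \<Sigma> (Var x) = True"
| "wf_trm \<Sigma> (Fun f b ts) = ((f, length ts) \<in> \<Sigma> \<and> (\<forall>t\<in>set ts. wf_trm \<Sigma> t))"

fun is_pos :: "nat list \<Rightarrow> ('f,'v) trm \<Rightarrow> bool" where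
  "is_pos [] t = True"
| "is_pos (i # p) (Var x) = False"
| "is_pos (i # p) (Fun f b ts) = (i < length ts \<and> is_pos p (ts ! i))"

fun subt_at :: "('f,'v) trm \<Rightarrow> nat list \<Rightarrow> ('f,'v) trm" where
  "subt_at t [] = t"
| "subt_at (Var x) (i # p) = Var x"
| "subt_at (Fun f b ts) (i # p) = subt_at (ts ! i) p"

fun repl :: "('f,'v) trm \<Rightarrow> nat list \<Rightarrow> ('f,'v) trm \<Rightarrow> ('f,'v) trm" where
  "repl t [] u = u"
| "repl (Var x) (i # p) u = Var x"
| "repl (Fun f b ts) (i # p) u = Fun f b (ts[i := repl (ts ! i) p u])"

fun flat_above :: "nat list \<Rightarrow> ('f,'v) trm \<Rightarrow> ('f,'v) trm" where
  "flat_above [] t = t"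
| "flat_above (i # p) (Var x) = Var x"
| "flat_above (i # p) (Fun f b ts) = Fun f False (ts[i := flat_above p (ts ! i)])"

definition annot_at :: "('f,'v) trm \<Rightarrow> nat list \<Rightarrow> bool" where
  "annot_at t p = (case subt_at t p of Var x \<Rightarrow> False | Fun f b ts \<Rightarrow> b)"

definition root :: "('f,'v) trm \<Rightarrow> ('f \<times> nat) option" where
  "root t = (case t of Var x \<Rightarrow> None | Fun f b ts \<Rightarrow> Some (f, length ts))"

text \<open>An ADP  l \<rightarrow> {p1:r1,...,pk:rk}^m ; the multi-distribution is a list.\<close>
datatype ('f,'v) adp = ADP (adp_lhs: "('f,'v) trm") (adp_rhs: "(real \<times> ('f,'v) trm) list") (adp_flag: bool)

type_synonym ('f,'v) adp_problem = "('f,'v) adp set \<times> ('f,'v) adp set"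

definition defs :: "('f,'v) adp set \<Rightarrow> ('f \<times> nat) set" where
  "defs P = {fn. \<exists>\<alpha>\<in>P. root (adp_lhs \<alpha>) = Some fn}"

definition adp_ok :: "('f \<times> nat) set \<Rightarrow> ('f,'v) adp set \<Rightarrow> ('f,'v) adp \<Rightarrow> bool" where
  "adp_ok \<Sigma> P \<alpha> \<longleftrightarrow>
     (\<exists>f ts. adp_lhs \<alpha> = Fun f False ts) \<and> flat (adp_lhs \<alpha>) = adp_lhs \<alpha> \<and> wf_trm \<Sigma> (adp_lhs \<alpha>) \<and>
     (\<forall>(p, r) \<in> set (adp_rhs \<alpha>). 0 < p \<and> p \<le> 1 \<and> vars r \<subseteq> vars (adp_lhs \<alpha>) \<and> wf_trm \<Sigma> r
         \<and> annot_funs r \<subseteq> defs P) \<and>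
     sum_list (map fst (adp_rhs \<alpha>)) = 1"

definition is_adp_problem :: "('f \<times> nat) set \<Rightarrow> ('f,'v) adp_problem \<Rightarrow> bool" where
  "is_adp_problem \<Sigma> PS \<longleftrightarrow> finite (fst PS) \<and> snd PS \<subseteq> fst PS \<and> (\<forall>\<alpha>\<in>fst PS. adp_ok \<Sigma> (fst PS) \<alpha>)"

definition NF :: "('f,'v) adp set \<Rightarrow> ('f,'v) trm \<Rightarrow> bool" where
  "NF P u \<longleftrightarrow> \<not> (\<exists>\<pi> \<alpha> \<sigma>. is_pos \<pi> u \<and> \<alpha> \<in> P \<and> flat (subt_at u \<pi>) = adp_lhs \<alpha> \<cdot> \<sigma>)"

definition ANF :: "('f,'v) adp set \<Rightarrow> ('f,'v) trm \<Rightarrow> bool" where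
  "ANF P u \<longleftrightarrow> (\<forall>\<pi>. is_pos \<pi> u \<and> \<pi> \<noteq> [] \<longrightarrow> NF P (subt_at u \<pi>))"

definition step_ok :: "('f,'v) adp set \<Rightarrow> ('f,'v) trm \<Rightarrow> nat list \<Rightarrow> ('f,'v) adp \<Rightarrow> ('f,'v) subst \<Rightarrow> bool" where
  "step_ok P s \<pi> \<alpha> \<sigma> \<longleftrightarrow> is_pos \<pi> s \<and> \<alpha> \<in> P \<and>
     (case subt_at s \<pi> of Var x \<Rightarrow> False | Fun f b ts \<Rightarrow> b \<or> (f, length ts) \<in> defs P) \<and>
     flat (subt_at s \<pi>) = adp_lhs \<alpha> \<cdot> \<sigma> \<and> ANF P (adp_lhs \<alpha> \<cdot> \<sigma>)"

text \<open>The resulting multi-distribution, by the cases (at), (nt), (af), (nf).\<close>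
definition step_result :: "('f,'v) trm \<Rightarrow> nat list \<Rightarrow> ('f,'v) adp \<Rightarrow> ('f,'v) subst \<Rightarrow> (real \<times> ('f,'v) trm) list" where
  "step_result s \<pi> \<alpha> \<sigma> = map (\<lambda>(p, r). (p,
      if adp_flag \<alpha> \<and> annot_at s \<pi> then repl s \<pi> (r \<cdot> \<sigma>)
      else if adp_flag \<alpha> then repl s \<pi> (flat r \<cdot> \<sigma>)
      else if annot_at s \<pi> then flat_above \<pi> (repl s \<pi> (r \<cdot> \<sigma>))
      else flat_above \<pi> (repl s \<pi> (flat r \<cdot> \<sigma>)))) (adp_rhs \<alpha>)"

text \<open>A (possibly infinite, finitely branching) tree: nodes are addressed by lists of child
  indices; each node carries its probability and term, and each inner node records the
  rewrite step (position, ADP, substitution) used to obtain its children.\<close>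
record ('f,'v) ctree =
  ct_nodes :: "nat list set"
  ct_prob :: "nat list \<Rightarrow> real"
  ct_term :: "nat list \<Rightarrow> ('f,'v) trm"
  ct_pos :: "nat list \<Rightarrow> nat list"
  ct_adp :: "nat list \<Rightarrow> ('f,'v) adp"
  ct_sub :: "nat list \<Rightarrow> ('f,'v) subst"

definition ct_inner :: "('f,'v) ctree \<Rightarrow> nat list \<Rightarrow> bool" where
  "ct_inner T v \<longleftrightarrow> v \<in> ct_nodes T \<and> (\<exists>i. v @ [i] \<in> ct_nodes T)"

definition chain_tree :: "('f,'v) adp set \<Rightarrow> ('f,'v) trm \<Rightarrow> ('f,'v) ctree \<Rightarrow> bool" where
  "chain_tree P t0 T \<longleftrightarrow>
     [] \<in> ct_nodes T \<and> (\<forall>v i. v @ [i] \<in> ct_nodes T \<longrightarrow> v \<in> ct_nodes T) \<and>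
     ct_prob T [] = 1 \<and> ct_term T [] = t0 \<and>
     (\<forall>v. ct_inner T v \<longrightarrow>
        (let \<mu> = step_result (ct_term T v) (ct_pos T v) (ct_adp T v) (ct_sub T v) in
          step_ok P (ct_term T v) (ct_pos T v) (ct_adp T v) (ct_sub T v) \<and>
          (\<forall>i. v @ [i] \<in> ct_nodes T \<longleftrightarrow> i < length \<mu>) \<and>
          (\<forall>i < length \<mu>. ct_prob T (v @ [i]) = ct_prob T v * fst (\<mu> ! i)
                         \<and> ct_term T (v @ [i]) = snd (\<mu> ! i))))"

text \<open>Expected derivation length: inner nodes rewritten by (at)/(af)-steps (annotated
  position) with an ADP in S.\<close>
definition edl :: "('f,'v) adp set \<Rightarrow> ('f,'v) ctree \<Rightarrow> ennreal" where
  "edl S T = (\<Sum>\<^sub>\<infinity>v \<in> {v. ct_inner T v \<and> annot_at (ct_term T v) (ct_pos T v) \<and> ct_adp T v \<in> S}.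
                 ennreal (ct_prob T v))"

definition edh :: "('f,'v) adp_problem \<Rightarrow> ('f,'v) trm \<Rightarrow> ennreal" where
  "edh PS t = Sup {edl (snd PS) T | T. chain_tree (fst PS) (sharp t) T}"

definition basic :: "('f \<times> nat) set \<Rightarrow> ('f,'v) adp set \<Rightarrow> ('f,'v) trm \<Rightarrow> bool" where
  "basic \<Sigma> P t \<longleftrightarrow> wf_trm \<Sigma> t \<and> flat t = t \<and>
     (\<exists>f ts. t = Fun f False ts \<and> (f, length ts) \<in> defs P \<and> (\<forall>u\<in>set ts. funs u \<inter> defs P = {}))"

definition rc_fun :: "('f \<times> nat) set \<Rightarrow> ('f,'v) adp_problem \<Rightarrow> nat \<Rightarrow> ennreal" where
  "rc_fun \<Sigma> PS n = Sup {edh PS t | t. basic \<Sigma> (fst PS) t \<and> tsize t \<le> n}"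

datatype cplx = Pol nat | Exp | Exp2 | Fin | Omega

fun crank :: "cplx \<Rightarrow> nat" where
  "crank (Pol a) = 0" | "crank Exp = 1" | "crank Exp2 = 2" | "crank Fin = 3" | "crank Omega = 4"

fun cdeg :: "cplx \<Rightarrow> nat" where
  "cdeg (Pol a) = a" | "cdeg Exp = 0" | "cdeg Exp2 = 0" | "cdeg Fin = 0" | "cdeg Omega = 0"

instantiation cplx :: linorder
begin
definition less_eq_cplx :: "cplx \<Rightarrow> cplx \<Rightarrow> bool" where
  "x \<le> y \<longleftrightarrow> crank x < crank y \<or> (crank x = crank y \<and> cdeg x \<le> cdeg y)"
definition less_cplx :: "cplx \<Rightarrow> cplx \<Rightarrow> bool" where
  "x < y \<longleftrightarrow> crank x < crank y \<or> (crank x = crank y \<and> cdeg x < cdeg y)"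
instance
proof
  fix x y z :: cplx
  show "(x < y) = (x \<le> y \<and> \<not> y \<le> x)" by (auto simp: less_eq_cplx_def less_cplx_def)
  show "x \<le> x" by (simp add: less_eq_cplx_def)
  show "x \<le> y \<Longrightarrow> y \<le> z \<Longrightarrow> x \<le> z" by (auto simp: less_eq_cplx_def)
  show "x \<le> y \<Longrightarrow> y \<le> x \<Longrightarrow> x = y"
    by (cases x; cases y; auto simp: less_eq_cplx_def)
  show "x \<le> y \<or> y \<le> x" by (auto simp: less_eq_cplx_def)
qed
end

definition bigO :: "(nat \<Rightarrow> ennreal) \<Rightarrow> (nat \<Rightarrow> real) \<Rightarrow> bool" where
  "bigO f g \<longleftrightarrow> (\<exists>c::real. \<exists>N. \<forall>n\<ge>N. f n \<le> ennreal (c * g n))"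

definition iota :: "(nat \<Rightarrow> ennreal) \<Rightarrow> cplx" where
  "iota f = (if \<exists>a. bigO f (\<lambda>n. real n ^ a) then Pol (LEAST a. bigO f (\<lambda>n. real n ^ a))
     else if \<exists>k::nat. bigO f (\<lambda>n. 2 ^ (n ^ k)) then Exp
     else if \<exists>k::nat. bigO f (\<lambda>n. 2 ^ (2 ^ (n ^ k))) then Exp2
     else if \<forall>n. f n \<noteq> \<infinity> then Fin
     else Omega)"

definition iota_prob :: "('f \<times> nat) set \<Rightarrow> ('f,'v) adp_problem \<Rightarrow> cplx" where
  "iota_prob \<Sigma> PS = iota (rc_fun \<Sigma> PS)"

datatype ('f,'v) ptree = PT (pt_prob: "('f,'v) adp_problem") (pt_cplx: cplx) (pt_children: "('f,'v) ptree list")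

fun pt_at :: "('f,'v) ptree \<Rightarrow> nat list \<Rightarrow> ('f,'v) ptree option" where
  "pt_at T [] = Some T"
| "pt_at (PT l c ts) (i # p) = (if i < length ts then pt_at (ts ! i) p else None)"

text \<open>Maximum of the complexity labels of the strict ancestors of the node at position p
  (Pol 0, the least complexity, for the empty maximum).\<close>
fun pt_prefix :: "('f,'v) ptree \<Rightarrow> nat list \<Rightarrow> cplx" where
  "pt_prefix T [] = Pol 0"
| "pt_prefix (PT l c ts) (i # p) = max c (pt_prefix (ts ! i) p)"

text \<open>Maximum of L'_C over all nodes reachable from the root of the given tree
  (L'_C is the label on inner nodes and iota of the problem on leaves).\<close>
fun pt_maxL' :: "('f \<times> nat) set \<Rightarrow> ('f,'v) ptree \<Rightarrow> cplx" where
  "pt_maxL' \<Sigma> (PT l c ts) =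
     (if ts = [] then iota_prob \<Sigma> l else fold max (map (pt_maxL' \<Sigma>) ts) c)"

fun proof_tree :: "('f \<times> nat) set \<Rightarrow> ('f,'v) ptree \<Rightarrow> bool" where
  "proof_tree \<Sigma> (PT l c ts) \<longleftrightarrow> is_adp_problem \<Sigma> l \<and>
     (ts = [] \<longrightarrow> c = (if snd l = {} then Pol 0 else Omega)) \<and>
     (\<forall>t\<in>set ts. proof_tree \<Sigma> t)"

definition well_formed :: "('f \<times> nat) set \<Rightarrow> ('f,'v) ptree \<Rightarrow> bool" where
  "well_formed \<Sigma> T \<longleftrightarrow> (\<forall>p T'. pt_at T p = Some T' \<longrightarrow>
     (case pt_prob T' of (P, S) \<Rightarrow>
        iota_prob \<Sigma> (P, S) \<le> max (pt_prefix T p) (pt_maxL' \<Sigma> T') \<and>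
        iota_prob \<Sigma> (P, P - S) \<le> pt_prefix T p))"

definition sound_output :: "('f \<times> nat) set \<Rightarrow> ('f,'v) adp_problem \<Rightarrow> cplx \<Rightarrow> ('f,'v) adp_problem list \<Rightarrow> bool" where
  "sound_output \<Sigma> PS c outs \<longleftrightarrow> (\<forall>T p T'.
     proof_tree \<Sigma> T \<and> well_formed \<Sigma> T \<and> pt_at T p = Some T' \<and> pt_prob T' = PS \<longrightarrow>
       iota_prob \<Sigma> PS \<le> fold max (map (iota_prob \<Sigma>) outs) (max (pt_prefix T p) c) \<and>
       (\<forall>(Pi, Si) \<in> set outs. iota_prob \<Sigma> (Pi, Pi - Si) \<le> max (pt_prefix T p) c))"

definition np :: "('f,'v) adp set \<Rightarrow> (('f,'v) trm \<times> ('f,'v) trm) set" where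
  "np P = {(adp_lhs \<alpha>, flat r) | \<alpha> p r. \<alpha> \<in> P \<and> adp_flag \<alpha> \<and> (p, r) \<in> set (adp_rhs \<alpha>)}"

definition NF_trs :: "(('f,'v) trm \<times> ('f,'v) trm) set \<Rightarrow> ('f,'v) trm \<Rightarrow> bool" where
  "NF_trs R u \<longleftrightarrow> \<not> (\<exists>\<pi> l r \<sigma>. is_pos \<pi> u \<and> (l, r) \<in> R \<and> subt_at u \<pi> = l \<cdot> \<sigma>)"

definition istep :: "(('f,'v) trm \<times> ('f,'v) trm) set \<Rightarrow> (('f,'v) trm \<times> ('f,'v) trm) set" where
  "istep R = {(s, t). \<exists>\<pi> l r \<sigma>. is_pos \<pi> s \<and> (l, r) \<in> R \<and> subt_at s \<pi> = l \<cdot> \<sigma> \<and>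
      (\<forall>\<pi>'. is_pos \<pi>' (l \<cdot> \<sigma>) \<and> \<pi>' \<noteq> [] \<longrightarrow> NF_trs R (subt_at (l \<cdot> \<sigma>) \<pi>')) \<and>
      t = repl s \<pi> (r \<cdot> \<sigma>)}"

text \<open>Dependency pairs; None plays the role of the fresh symbol bottom.\<close>
type_synonym ('f,'v) dpair = "('f,'v) trm \<times> ('f,'v) trm option"

definition dp :: "('f,'v) adp \<Rightarrow> ('f,'v) dpair set" where
  "dp \<alpha> = {(sharp (adp_lhs \<alpha>), Some (sharp t)) | t. \<exists>p r \<pi>. (p, r) \<in> set (adp_rhs \<alpha>) \<and>
              is_pos \<pi> r \<and> annot_at r \<pi> \<and> t = flat (subt_at r \<pi>)}"

definition dp_bot :: "('f,'v) adp \<Rightarrow> ('f,'v) dpair set" where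
  "dp_bot \<alpha> = (if dp \<alpha> = {} then {(sharp (adp_lhs \<alpha>), None)} else dp \<alpha>)"

definition dpP :: "('f,'v) adp set \<Rightarrow> ('f,'v) dpair set" where
  "dpP P = (\<Union>\<alpha>\<in>P. dp_bot \<alpha>)"

definition dg_edge :: "('f,'v) adp set \<Rightarrow> ('f,'v) dpair \<Rightarrow> ('f,'v) dpair \<Rightarrow> bool" where
  "dg_edge P n1 n2 \<longleftrightarrow> n1 \<in> dpP P \<and> n2 \<in> dpP P \<and>
     (case snd n1 of None \<Rightarrow> False
      | Some t1 \<Rightarrow> \<exists>\<sigma>1 \<sigma>2. (t1 \<cdot> \<sigma>1, fst n2 \<cdot> \<sigma>2) \<in> (istep (np P))\<^sup>* \<and>
                         ANF P (fst n1 \<cdot> \<sigma>1) \<and> ANF P (fst n2 \<cdot> \<sigma>2))"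

definition Pre :: "('f,'v) adp set \<Rightarrow> ('f,'v) adp \<Rightarrow> ('f,'v) adp set" where
  "Pre P \<alpha> = {\<beta> \<in> P. \<exists>n1 \<in> dp_bot \<beta>. \<exists>n2 \<in> dp_bot \<alpha>. dg_edge P n1 n2}"

end

theory Submission
  imports Defs
begin

fun cnt :: "('f,'v) trm \<Rightarrow> nat" where
  "cnt (Var x) = 0"
| "cnt (Fun f b ts) = (if b then 1 else 0) + sum_list (map cnt ts)"

fun phi :: "(('f,'v) trm \<Rightarrow> bool) \<Rightarrow> ('f,'v) trm \<Rightarrow> nat" where
  "phi R (Var x) = 0"
| "phi R (Fun f b ts) = (if b \<and> R (Fun f b ts) then 1 else 0) + sum_list (map (phi R) ts)"

lemma sum_list_map_le: "(\<And>x. x \<in> set xs \<Longrightarrow> f x \<le> g x) \<Longrightarrow> sum_list (map f xs) \<le> (sum_list (map g xs) :: nat)"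
  by (induction xs) (auto intro: add_mono)

lemma phi_le_cnt: "phi R t \<le> cnt t"
proof (induction t)
  case (Fun f b ts)
  have "sum_list (map (phi R) ts) \<le> sum_list (map cnt ts)" by (rule sum_list_map_le) (use Fun in auto)
  then show ?case by auto
qed auto

lemma flat_flat[simp]: "flat (flat t) = flat t"
  by (induction t) (auto simp: map_idI)

lemma cnt_flat[simp]: "cnt (flat t) = 0"
  by (induction t) (auto simp: o_def)

lemma flat_subst: "flat (t \<cdot> \<sigma>) = flat t \<cdot> (flat \<circ> \<sigma>)"
  by (induction t) auto

lemma subst_cong: "(\<And>x. x \<in> vars t \<Longrightarrow> \<sigma> x = \<tau> x) \<Longrightarrow> t \<cdot> \<sigma> = t \<cdot> \<tau>"
  by (induction t) auto

lemma subst_eqD: "t \<cdot> \<sigma> = t \<cdot> \<tau> \<Longrightarrow> x \<in> vars t \<Longrightarrow> \<sigma> x = \<tau> x"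
  by (induction t) (auto simp: map_eq_conv)

lemma cnt_subst: "(\<And>x. x \<in> vars t \<Longrightarrow> cnt (\<sigma> x) = 0) \<Longrightarrow> cnt (t \<cdot> \<sigma>) = cnt t"
proof (induction t)
  case (Fun f b ts)
  then have "map (\<lambda>t. cnt (t \<cdot> \<sigma>)) ts = map cnt ts" by auto
  then have "sum_list (map (\<lambda>t. cnt (t \<cdot> \<sigma>)) ts) = sum_list (map cnt ts)" by metis
  then show ?case by (simp add: o_def)
qed auto

lemma is_pos_flat[simp]: "is_pos \<pi> (flat s) = is_pos \<pi> s"
  by (induction \<pi> s rule: is_pos.induct) auto

lemma subt_at_flat: "is_pos \<pi> s \<Longrightarrow> subt_at (flat s) \<pi> = flat (subt_at s \<pi>)"
  by (induction \<pi> s rule: is_pos.induct) auto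

lemma repl_flat: "is_pos \<pi> s \<Longrightarrow> flat (repl s \<pi> w) = repl (flat s) \<pi> (flat w)"
  by (induction \<pi> s rule: is_pos.induct) (auto simp: map_update)

lemma is_pos_sharp: "\<pi> \<noteq> [] \<Longrightarrow> is_pos \<pi> (sharp t) = is_pos \<pi> t"
  by (cases t; cases \<pi>) auto

lemma subt_at_sharp: "\<pi> \<noteq> [] \<Longrightarrow> subt_at (sharp t) \<pi> = subt_at t \<pi>"
  by (cases t; cases \<pi>) auto

lemma repl_sharp: "\<pi> \<noteq> [] \<Longrightarrow> repl (sharp t) \<pi> w = sharp (repl t \<pi> w)"
  by (cases t; cases \<pi>) auto

lemma ANF_sharp: "ANF P (sharp t) = ANF P t"
  unfolding ANF_def using is_pos_sharp subt_at_sharp by metis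

lemma vars_subt_at: "is_pos \<pi> r \<Longrightarrow> vars (subt_at r \<pi>) \<subseteq> vars r"
  apply (induction \<pi> r rule: is_pos.induct)
    apply auto
  apply (meson nth_mem subsetD)
  done

lemma sum_list_update:
  "i < length xs \<Longrightarrow> sum_list (map f (xs[i:=y])) + f (xs!i) = sum_list (map f xs) + (f y :: nat)"
  by (induction xs arbitrary: i) (auto split: nat.splits)

lemma phi_flat_above:
  "is_pos \<pi> s \<Longrightarrow> phi R (flat_above \<pi> (repl s \<pi> w)) + phi R (subt_at s \<pi>) \<le> phi R s + phi R w"
proof (induction \<pi> s rule: is_pos.induct)
  case (3 i p f b ts)
  then have i: "i < length ts" and p: "is_pos p (ts ! i)" by auto
  have "phi R (flat_above (i # p) (repl (Fun f b ts) (i # p) w)) =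
        sum_list (map (phi R) (ts[i := flat_above p (repl (ts ! i) p w)]))"
    using i by simp
  moreover have "sum_list (map (phi R) (ts[i := flat_above p (repl (ts ! i) p w)])) + phi R (ts ! i)
     = sum_list (map (phi R) ts) + phi R (flat_above p (repl (ts ! i) p w))"
    by (rule sum_list_update[OF i])
  moreover have "phi R (flat_above p (repl (ts ! i) p w)) + phi R (subt_at (ts ! i) p) \<le> phi R (ts ! i) + phi R w"
    using 3 i p by auto
  ultimately show ?case by simp
qed auto

lemma phi_repl:
  assumes "\<And>u \<pi>'. is_pos \<pi>' u \<Longrightarrow> \<pi>' \<noteq> [] \<Longrightarrow> flat (subt_at u \<pi>') = L \<Longrightarrow> R (repl u \<pi>' w) \<Longrightarrow> R u"
  shows "is_pos \<pi> s \<Longrightarrow> flat (subt_at s \<pi>) = L \<Longrightarrow> phi R (repl s \<pi> w) + phi R (subt_at s \<pi>) \<le> phi R s + phi R w"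
proof (induction \<pi> s rule: is_pos.induct)
  case (3 i p f b ts)
  then have i: "i < length ts" and p: "is_pos p (ts ! i)" by auto
  have R: "R (repl (Fun f b ts) (i # p) w) \<Longrightarrow> R (Fun f b ts)"
    using assms[of "i # p" "Fun f b ts"] 3 by auto
  have "phi R (repl (Fun f b ts) (i # p) w) \<le> (if b \<and> R (Fun f b ts) then 1 else 0) +
        sum_list (map (phi R) (ts[i := repl (ts ! i) p w]))"
    using i R by auto
  moreover have "sum_list (map (phi R) (ts[i := repl (ts ! i) p w])) + phi R (ts ! i)
     = sum_list (map (phi R) ts) + phi R (repl (ts ! i) p w)"
    by (rule sum_list_update[OF i])
  moreover have "phi R (repl (ts ! i) p w) + phi R (subt_at (ts ! i) p) \<le> phi R (ts ! i) + phi R w"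
    using 3 i p by auto
  ultimately show ?case by simp
qed auto

lemma phi_subst_zero:
  "(\<And>x. x \<in> vars r \<Longrightarrow> cnt (\<sigma> x) = 0) \<Longrightarrow>
   (\<And>\<rho>. is_pos \<rho> r \<Longrightarrow> annot_at r \<rho> \<Longrightarrow> \<not> R (subt_at r \<rho> \<cdot> \<sigma>)) \<Longrightarrow> phi R (r \<cdot> \<sigma>) = 0"
proof (induction r)
  case (Var x)
  then show ?case using phi_le_cnt[of R "\<sigma> x"] by auto
next
  case (Fun f b ts)
  have "\<not> (b \<and> R (Fun f b ts \<cdot> \<sigma>))"
    using Fun.prems(2)[of "[]"] by (auto simp: annot_at_def)
  moreover have "phi R (t \<cdot> \<sigma>) = 0" if t: "t \<in> set ts" for t
  proof -
    obtain j where j: "j < length ts" "ts ! j = t" using t by (auto simp: in_set_conv_nth)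
    show ?thesis
    proof (rule Fun.IH[OF t])
      show "cnt (\<sigma> x) = 0" if "x \<in> vars t" for x using Fun.prems(1) that t by auto
      show "\<not> R (subt_at t \<rho> \<cdot> \<sigma>)" if "is_pos \<rho> t" "annot_at t \<rho>" for \<rho>
        using Fun.prems(2)[of "j # \<rho>"] that j by (auto simp: annot_at_def)
    qed
  qed
  ultimately show ?case by (auto simp: o_def)
qed

lemma vars_flat[simp]: "vars (flat t) = vars t"
  by (induction t) auto

definition Reach :: "('f,'v) adp set \<Rightarrow> ('f,'v) adp \<Rightarrow> ('f,'v) trm \<Rightarrow> bool" where
  "Reach P \<alpha> u \<longleftrightarrow> (\<exists>\<sigma>2. (sharp (flat u), sharp (adp_lhs \<alpha>) \<cdot> \<sigma>2) \<in> (istep (np P))\<^sup>* \<and>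
      ANF P (sharp (adp_lhs \<alpha>) \<cdot> \<sigma>2))"

lemma NF_to_NF_trs:
  assumes "\<forall>\<beta>\<in>P. flat (adp_lhs \<beta>) = adp_lhs \<beta>" "NF P v"
  shows "NF_trs (np P) v"
  unfolding NF_trs_def
proof
  assume "\<exists>\<pi> l r \<tau>. is_pos \<pi> v \<and> (l, r) \<in> np P \<and> subt_at v \<pi> = l \<cdot> \<tau>"
  then obtain \<pi> l r \<tau> where *: "is_pos \<pi> v" "(l, r) \<in> np P" "subt_at v \<pi> = l \<cdot> \<tau>" by blast
  from *(2) obtain \<beta> where b: "\<beta> \<in> P" "l = adp_lhs \<beta>" unfolding np_def by auto
  have "flat (subt_at v \<pi>) = adp_lhs \<beta> \<cdot> (flat \<circ> \<tau>)"
    using *(3) b assms(1) by (simp add: flat_subst)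
  then show False using assms(2) *(1) b(1) unfolding NF_def by blast
qed

lemma sharp_subst_Fun: "sharp (Fun f b ts \<cdot> \<sigma>) = sharp (Fun f b ts) \<cdot> \<sigma>"
  by simp

lemma lhs_Fun: "adp_ok \<Sigma> P \<beta> \<Longrightarrow> \<exists>f ts. adp_lhs \<beta> = Fun f False ts"
  unfolding adp_ok_def by blast

lemma sharp_lhs_subst: "adp_ok \<Sigma> P \<beta> \<Longrightarrow> sharp (adp_lhs \<beta>) \<cdot> \<sigma> = sharp (adp_lhs \<beta> \<cdot> \<sigma>)"
  using lhs_Fun by fastforce

lemma Reach_back:
  assumes lf: "\<forall>\<beta>\<in>P. flat (adp_lhs \<beta>) = adp_lhs \<beta>"
    and g: "\<gamma> \<in> P" "adp_flag \<gamma>" "(p, r) \<in> set (adp_rhs \<gamma>)"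
    and anf: "ANF P (adp_lhs \<gamma> \<cdot> \<sigma>)" and fw: "flat w = flat r \<cdot> \<sigma>"
    and u: "is_pos \<pi>' u" "\<pi>' \<noteq> []" "flat (subt_at u \<pi>') = adp_lhs \<gamma> \<cdot> \<sigma>"
    and R: "Reach P \<alpha> (repl u \<pi>' w)"
  shows "Reach P \<alpha> u"
proof -
  have st: "(sharp (flat u), sharp (flat (repl u \<pi>' w))) \<in> istep (np P)"
    unfolding istep_def
  proof (clarify, intro exI conjI)
    show "is_pos \<pi>' (sharp (flat u))" using u by (simp add: is_pos_sharp)
    show "(adp_lhs \<gamma>, flat r) \<in> np P" unfolding np_def using g by blast
    show "subt_at (sharp (flat u)) \<pi>' = adp_lhs \<gamma> \<cdot> \<sigma>"
      using u by (simp add: subt_at_sharp subt_at_flat)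
    show "\<forall>\<pi>''. is_pos \<pi>'' (adp_lhs \<gamma> \<cdot> \<sigma>) \<and> \<pi>'' \<noteq> [] \<longrightarrow> NF_trs (np P) (subt_at (adp_lhs \<gamma> \<cdot> \<sigma>) \<pi>'')"
      using anf lf NF_to_NF_trs unfolding ANF_def by blast
    show "sharp (flat (repl u \<pi>' w)) = repl (sharp (flat u)) \<pi>' (flat r \<cdot> \<sigma>)"
      using u by (simp add: repl_sharp repl_flat fw)
  qed
  from R obtain \<sigma>2 where "(sharp (flat (repl u \<pi>' w)), sharp (adp_lhs \<alpha>) \<cdot> \<sigma>2) \<in> (istep (np P))\<^sup>*"
     "ANF P (sharp (adp_lhs \<alpha>) \<cdot> \<sigma>2)" unfolding Reach_def by blast
  with st show ?thesis unfolding Reach_def by (meson converse_rtrancl_into_rtrancl)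
qed

lemma sigma_flat:
  assumes "step_ok P s \<pi> \<gamma> \<sigma>" "flat (adp_lhs \<gamma>) = adp_lhs \<gamma>" "x \<in> vars (adp_lhs \<gamma>)"
  shows "flat (\<sigma> x) = \<sigma> x"
proof -
  have e: "flat (subt_at s \<pi>) = adp_lhs \<gamma> \<cdot> \<sigma>" using assms(1) unfolding step_ok_def by blast
  have "flat (adp_lhs \<gamma> \<cdot> \<sigma>) = adp_lhs \<gamma> \<cdot> \<sigma>" by (metis e flat_flat)
  then have "adp_lhs \<gamma> \<cdot> (flat \<circ> \<sigma>) = adp_lhs \<gamma> \<cdot> \<sigma>" using assms(2) by (simp add: flat_subst)
  from subst_eqD[OF this assms(3)] show ?thesis by simp
qed

lemma dp_bot_target: "\<exists>n2\<in>dp_bot \<alpha>. fst n2 = sharp (adp_lhs \<alpha>)"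
proof (cases "dp \<alpha> = {}")
  case True then show ?thesis by (simp add: dp_bot_def)
next
  case False
  then obtain n where "n \<in> dp \<alpha>" by blast
  moreover then have "fst n = sharp (adp_lhs \<alpha>)" unfolding dp_def by auto
  ultimately show ?thesis using False by (auto simp: dp_bot_def)
qed

lemma new_not_reach:
  assumes wf: "\<forall>\<beta>\<in>P. adp_ok \<Sigma> P \<beta>" and aS: "\<alpha> \<in> S" "S \<subseteq> P" and pre: "Pre P \<alpha> \<inter> S = {}"
    and gS: "\<gamma> \<in> S" and so: "step_ok P s \<pi> \<gamma> \<sigma>" and pr: "(p, r) \<in> set (adp_rhs \<gamma>)"
    and rho: "is_pos \<rho> r" "annot_at r \<rho>"
  shows "\<not> Reach P \<alpha> (subt_at r \<rho> \<cdot> \<sigma>)"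
proof
  assume R: "Reach P \<alpha> (subt_at r \<rho> \<cdot> \<sigma>)"
  have gP: "\<gamma> \<in> P" using gS aS by auto
  have aP: "\<alpha> \<in> P" using aS by auto
  have okg: "adp_ok \<Sigma> P \<gamma>" using wf gP by auto
  have lf: "flat (adp_lhs \<gamma>) = adp_lhs \<gamma>" using okg unfolding adp_ok_def by blast
  have vr: "vars r \<subseteq> vars (adp_lhs \<gamma>)" using okg pr unfolding adp_ok_def by fastforce
  define u where "u = subt_at r \<rho>"
  obtain g us where uF: "u = Fun g True us" using rho(2) unfolding annot_at_def u_def
    by (auto split: trm.splits)
  have vu: "vars u \<subseteq> vars (adp_lhs \<gamma>)" using vars_subt_at[OF rho(1)] vr u_def by auto
  define n1 where "n1 = (sharp (adp_lhs \<gamma>), Some (sharp (flat u)))"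
  have n1dp: "n1 \<in> dp \<gamma>" unfolding n1_def dp_def u_def using pr rho by blast
  then have n1b: "n1 \<in> dp_bot \<gamma>" by (auto simp: dp_bot_def)
  obtain n2 where n2: "n2 \<in> dp_bot \<alpha>" "fst n2 = sharp (adp_lhs \<alpha>)" using dp_bot_target by blast
  obtain \<sigma>2 where s2: "(sharp (flat (u \<cdot> \<sigma>)), sharp (adp_lhs \<alpha>) \<cdot> \<sigma>2) \<in> (istep (np P))\<^sup>*"
    "ANF P (sharp (adp_lhs \<alpha>) \<cdot> \<sigma>2)" using R unfolding Reach_def u_def by blast
  have "flat (u \<cdot> \<sigma>) = flat u \<cdot> \<sigma>"
    unfolding flat_subst by (rule subst_cong) (use vu sigma_flat[OF so lf] in auto)
  then have e: "sharp (flat (u \<cdot> \<sigma>)) = sharp (flat u) \<cdot> \<sigma>" using uF by simp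
  have "ANF P (sharp (adp_lhs \<gamma>) \<cdot> \<sigma>)"
    using so okg unfolding step_ok_def by (simp add: sharp_lhs_subst ANF_sharp)
  then have "dg_edge P n1 n2"
    unfolding dg_edge_def dpP_def using n1b n2 gP aP s2 e by (auto simp: n1_def)
  then have "\<gamma> \<in> Pre P \<alpha>" unfolding Pre_def using gP n1b n2 by blast
  then show False using pre gS by blast
qed

definition res_term :: "('f,'v) trm \<Rightarrow> nat list \<Rightarrow> ('f,'v) adp \<Rightarrow> ('f,'v) subst \<Rightarrow> ('f,'v) trm \<Rightarrow> ('f,'v) trm" where
  "res_term s \<pi> \<alpha> \<sigma> r =
      (if adp_flag \<alpha> \<and> annot_at s \<pi> then repl s \<pi> (r \<cdot> \<sigma>)
      else if adp_flag \<alpha> then repl s \<pi> (flat r \<cdot> \<sigma>)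
      else if annot_at s \<pi> then flat_above \<pi> (repl s \<pi> (r \<cdot> \<sigma>))
      else flat_above \<pi> (repl s \<pi> (flat r \<cdot> \<sigma>)))"

lemma step_result_nth: "i < length (adp_rhs \<alpha>) \<Longrightarrow>
  step_result s \<pi> \<alpha> \<sigma> ! i = (fst (adp_rhs \<alpha> ! i), res_term s \<pi> \<alpha> \<sigma> (snd (adp_rhs \<alpha> ! i)))"
  unfolding step_result_def res_term_def by (auto simp: case_prod_beta)

lemma step_result_length[simp]: "length (step_result s \<pi> \<alpha> \<sigma>) = length (adp_rhs \<alpha>)"
  unfolding step_result_def by simp

lemma step_phi:
  assumes wf: "\<forall>\<beta>\<in>P. adp_ok \<Sigma> P \<beta>" and aS: "\<alpha> \<in> S" "S \<subseteq> P" and pre: "Pre P \<alpha> \<inter> S = {}"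
    and so: "step_ok P s \<pi> \<gamma> \<sigma>" and pr: "(p, r) \<in> set (adp_rhs \<gamma>)" and K: "cnt r \<le> K"
  shows "phi (Reach P \<alpha>) (res_term s \<pi> \<gamma> \<sigma> r) + (if annot_at s \<pi> \<and> \<gamma> = \<alpha> then 1 else 0)
     \<le> phi (Reach P \<alpha>) s + (if annot_at s \<pi> \<and> \<gamma> \<notin> S then K else 0)"
proof -
  let ?R = "Reach P \<alpha>"
  have gP: "\<gamma> \<in> P" and pos: "is_pos \<pi> s" and L: "flat (subt_at s \<pi>) = adp_lhs \<gamma> \<cdot> \<sigma>"
    and anf: "ANF P (adp_lhs \<gamma> \<cdot> \<sigma>)" using so unfolding step_ok_def by auto
  have okg: "adp_ok \<Sigma> P \<gamma>" using wf gP by auto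
  have lf: "flat (adp_lhs \<gamma>) = adp_lhs \<gamma>" using okg unfolding adp_ok_def by blast
  have lfP: "\<forall>\<beta>\<in>P. flat (adp_lhs \<beta>) = adp_lhs \<beta>" using wf unfolding adp_ok_def by blast
  have vr: "vars r \<subseteq> vars (adp_lhs \<gamma>)" using okg pr unfolding adp_ok_def by fastforce
  have sf: "flat (\<sigma> x) = \<sigma> x" if "x \<in> vars r" for x using sigma_flat[OF so lf] vr that by auto
  have fw1: "flat (r \<cdot> \<sigma>) = flat r \<cdot> \<sigma>"
    unfolding flat_subst by (rule subst_cong) (use sf in auto)
  have fw2: "flat (flat r \<cdot> \<sigma>) = flat r \<cdot> \<sigma>"
    unfolding flat_subst flat_flat by (rule subst_cong) (use sf in auto)
  have c2: "cnt (flat r \<cdot> \<sigma>) = 0"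
  proof -
    have "cnt (\<sigma> x) = 0" if "x \<in> vars (flat r)" for x by (metis sf that vars_flat cnt_flat)
    then show ?thesis using cnt_subst[of "flat r" \<sigma>] by simp
  qed
  have p2: "phi ?R (flat r \<cdot> \<sigma>) = 0" using phi_le_cnt[of ?R "flat r \<cdot> \<sigma>"] c2 by simp
  have p1: "phi ?R (r \<cdot> \<sigma>) \<le> (if \<gamma> \<in> S then 0 else K)"
  proof (cases "\<gamma> \<in> S")
    case True
    have "phi ?R (r \<cdot> \<sigma>) = 0"
    proof (rule phi_subst_zero)
      show "cnt (\<sigma> x) = 0" if "x \<in> vars r" for x using sf[OF that] cnt_flat by metis
      show "\<not> ?R (subt_at r \<rho> \<cdot> \<sigma>)" if "is_pos \<rho> r" "annot_at r \<rho>" for \<rho>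
        using new_not_reach[OF wf aS pre True so pr that] .
    qed
    then show ?thesis using True by simp
  next
    case False
    have "cnt (r \<cdot> \<sigma>) = cnt r"
      by (rule cnt_subst) (use sf cnt_flat in metis)
    then show ?thesis using False K phi_le_cnt[of ?R "r \<cdot> \<sigma>"] by simp
  qed
  have p0: "(if annot_at s \<pi> \<and> \<gamma> = \<alpha> then 1 else 0) \<le> phi ?R (subt_at s \<pi>)"
  proof (cases "annot_at s \<pi> \<and> \<gamma> = \<alpha>")
    case True
    then obtain f ts where F: "subt_at s \<pi> = Fun f True ts" unfolding annot_at_def
      by (auto split: trm.splits)
    have "?R (subt_at s \<pi>)" unfolding Reach_def
    proof (intro exI conjI)
      show "(sharp (flat (subt_at s \<pi>)), sharp (adp_lhs \<alpha>) \<cdot> \<sigma>) \<in> (istep (np P))\<^sup>*"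
        using L True okg by (simp add: sharp_lhs_subst)
      show "ANF P (sharp (adp_lhs \<alpha>) \<cdot> \<sigma>)" using anf True okg by (simp add: sharp_lhs_subst ANF_sharp)
    qed
    then show ?thesis using F True by simp
  next
    case False
    then show ?thesis by auto
  qed
  have H: "\<And>w u \<pi>'. flat w = flat r \<cdot> \<sigma> \<Longrightarrow> adp_flag \<gamma> \<Longrightarrow> is_pos \<pi>' u \<Longrightarrow> \<pi>' \<noteq> [] \<Longrightarrow>
       flat (subt_at u \<pi>') = adp_lhs \<gamma> \<cdot> \<sigma> \<Longrightarrow> ?R (repl u \<pi>' w) \<Longrightarrow> ?R u"
    using Reach_back[OF lfP gP _ pr anf] by blast
  have main: "phi ?R (res_term s \<pi> \<gamma> \<sigma> r) + phi ?R (subt_at s \<pi>) \<le> phi ?R s +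
      (if annot_at s \<pi> then phi ?R (r \<cdot> \<sigma>) else phi ?R (flat r \<cdot> \<sigma>))"
  proof (cases "adp_flag \<gamma>")
    case True
    show ?thesis
    proof (cases "annot_at s \<pi>")
      case True
      then show ?thesis unfolding res_term_def using \<open>adp_flag \<gamma>\<close>
        phi_repl[of "adp_lhs \<gamma> \<cdot> \<sigma>" ?R "r \<cdot> \<sigma>", OF H[OF fw1 \<open>adp_flag \<gamma>\<close>] pos L] by simp
    next
      case False
      then show ?thesis unfolding res_term_def using \<open>adp_flag \<gamma>\<close>
        phi_repl[of "adp_lhs \<gamma> \<cdot> \<sigma>" ?R "flat r \<cdot> \<sigma>", OF H[OF fw2 \<open>adp_flag \<gamma>\<close>] pos L] by simp
    qed
  next
    case False
    then show ?thesis unfolding res_term_def using phi_flat_above[OF pos] by simp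
  qed
  show ?thesis using main p0 p1 p2 by (auto split: if_splits)
qed

definition clen :: "('f,'v) ctree \<Rightarrow> nat list \<Rightarrow> nat" where
  "clen T v = length (adp_rhs (ct_adp T v))"

definition Dn :: "('f,'v) ctree \<Rightarrow> nat \<Rightarrow> nat list set" where
  "Dn T n = {v \<in> ct_nodes T. length v = n}"

definition In :: "('f,'v) ctree \<Rightarrow> nat \<Rightarrow> nat list set" where
  "In T n = {v. ct_inner T v \<and> length v < n}"

lemma ct_child:
  assumes "chain_tree P t0 T" "ct_inner T v"
  shows "v @ [i] \<in> ct_nodes T \<longleftrightarrow> i < clen T v"
    and "i < clen T v \<Longrightarrow> ct_prob T (v @ [i]) = ct_prob T v * fst (adp_rhs (ct_adp T v) ! i)"
    and "i < clen T v \<Longrightarrow> ct_term T (v @ [i]) = res_term (ct_term T v) (ct_pos T v) (ct_adp T v) (ct_sub T v) (snd (adp_rhs (ct_adp T v) ! i))"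
    and "step_ok P (ct_term T v) (ct_pos T v) (ct_adp T v) (ct_sub T v)"
  using assms unfolding chain_tree_def Let_def clen_def by (auto simp: step_result_nth)

lemma ct_parent:
  assumes "chain_tree P t0 T" "v @ [i] \<in> ct_nodes T"
  shows "ct_inner T v" "i < clen T v"
proof -
  show "ct_inner T v" using assms unfolding chain_tree_def ct_inner_def by blast
  then show "i < clen T v" using ct_child(1)[OF assms(1)] assms(2) by blast
qed

lemma inner_nodes: "ct_inner T v \<Longrightarrow> v \<in> ct_nodes T"
  unfolding ct_inner_def by blast

lemma ct_prob_nonneg:
  assumes ct: "chain_tree P t0 T"
    and probs: "\<And>v x. ct_inner T v \<Longrightarrow> x \<in> set (adp_rhs (ct_adp T v)) \<Longrightarrow> 0 \<le> fst x"
  shows "v \<in> ct_nodes T \<Longrightarrow> 0 \<le> ct_prob T v"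
proof (induction v rule: rev_induct)
  case Nil then show ?case using ct unfolding chain_tree_def by simp
next
  case (snoc i v)
  have inn: "ct_inner T v" and il: "i < clen T v" using ct_parent[OF ct snoc.prems] by auto
  have "0 \<le> ct_prob T v" using snoc.IH inner_nodes[OF inn] by blast
  moreover have "0 \<le> fst (adp_rhs (ct_adp T v) ! i)" using probs[OF inn] il unfolding clen_def by auto
  ultimately show ?case using ct_child(2)[OF ct inn il] by simp
qed

lemma Dn_Suc:
  assumes ct: "chain_tree P t0 T"
  shows "Dn T (Suc n) = (\<lambda>(v,i). v @ [i]) ` (SIGMA v:{v \<in> Dn T n. ct_inner T v}. {..<clen T v})"
proof (rule set_eqI, rule iffI)
  fix x assume x: "x \<in> Dn T (Suc n)"
  then have "x \<noteq> []" unfolding Dn_def by auto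
  then obtain v i where xv: "x = v @ [i]" by (metis rev_exhaust)
  have "ct_inner T v" "i < clen T v" using ct_parent[OF ct] x xv unfolding Dn_def by auto
  then show "x \<in> (\<lambda>(v,i). v @ [i]) ` (SIGMA v:{v \<in> Dn T n. ct_inner T v}. {..<clen T v})"
    using x xv inner_nodes unfolding Dn_def by fastforce
next
  fix x assume "x \<in> (\<lambda>(v,i). v @ [i]) ` (SIGMA v:{v \<in> Dn T n. ct_inner T v}. {..<clen T v})"
  then show "x \<in> Dn T (Suc n)" using ct_child(1)[OF ct] unfolding Dn_def by auto
qed

lemma Dn_finite:
  assumes ct: "chain_tree P t0 T"
  shows "finite (Dn T n)"
proof (induction n)
  case 0
  have "Dn T 0 \<subseteq> {[]}" unfolding Dn_def by auto
  then show ?case using finite_subset by blast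
next
  case (Suc n)
  then show ?case unfolding Dn_Suc[OF ct] by auto
qed

lemma In_Suc: "In T (Suc n) = In T n \<union> {v \<in> Dn T n. ct_inner T v}"
  unfolding In_def Dn_def using inner_nodes by auto

lemma In_finite:
  assumes ct: "chain_tree P t0 T"
  shows "finite (In T n)"
proof (induction n)
  case 0 then show ?case unfolding In_def by simp
next
  case (Suc n) then show ?case unfolding In_Suc using Dn_finite[OF ct] by auto
qed

lemma tree_bound:
  fixes \<Phi> :: "nat list \<Rightarrow> nat" and a b :: "nat list \<Rightarrow> real" and K :: real
  assumes ct: "chain_tree P t0 T"
    and probs: "\<And>v x. ct_inner T v \<Longrightarrow> x \<in> set (adp_rhs (ct_adp T v)) \<Longrightarrow> 0 \<le> fst x"
    and psum: "\<And>v. ct_inner T v \<Longrightarrow> sum_list (map fst (adp_rhs (ct_adp T v))) = 1"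
    and step: "\<And>v i. ct_inner T v \<Longrightarrow> i < clen T v \<Longrightarrow> real (\<Phi> (v @ [i])) + b v \<le> real (\<Phi> v) + K * a v"
    and K: "0 \<le> K" and a: "\<And>v. 0 \<le> a v"
  shows "(\<Sum>v\<in>In T n. ct_prob T v * b v) + (\<Sum>v\<in>Dn T n. ct_prob T v * \<Phi> v)
           \<le> \<Phi> [] + K * (\<Sum>v\<in>In T n. ct_prob T v * a v)"
proof (induction n)
  case 0
  have "In T 0 = {}" unfolding In_def by auto
  moreover have "Dn T 0 = {[]}" using ct unfolding Dn_def chain_tree_def by auto
  ultimately show ?case using ct unfolding chain_tree_def by simp
next
  case (Suc n)
  let ?p = "ct_prob T"
  define J where "J = {v \<in> Dn T n. ct_inner T v}"
  have finD: "finite (Dn T n)" using Dn_finite[OF ct] .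
  have finJ: "finite J" unfolding J_def using finD by auto
  have finI: "finite (In T n)" using In_finite[OF ct] .
  have disj: "In T n \<inter> J = {}" unfolding J_def In_def Dn_def by auto
  have pnn: "\<And>v. v \<in> ct_nodes T \<Longrightarrow> 0 \<le> ?p v" by (rule ct_prob_nonneg[OF ct]) (use probs in auto)
  have child: "(\<Sum>i<clen T v. ?p (v @ [i]) * \<Phi> (v @ [i])) + ?p v * b v \<le> ?p v * \<Phi> v + K * (?p v * a v)"
    if v: "ct_inner T v" for v
  proof -
    let ?q = "\<lambda>i. fst (adp_rhs (ct_adp T v) ! i)"
    have q1: "(\<Sum>i<clen T v. ?q i) = 1"
      using psum[OF v] unfolding clen_def by (simp add: sum_list_sum_nth atLeast0LessThan)
    have qn: "0 \<le> ?q i" if "i < clen T v" for i using probs[OF v] that unfolding clen_def by auto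
    have pv: "0 \<le> ?p v" using pnn inner_nodes[OF v] by blast
    have "(\<Sum>i<clen T v. ?p (v @ [i]) * \<Phi> (v @ [i])) = (\<Sum>i<clen T v. ?p v * (?q i * \<Phi> (v @ [i])))"
      by (rule sum.cong) (auto simp: ct_child(2)[OF ct v])
    also have "\<dots> \<le> (\<Sum>i<clen T v. ?p v * (?q i * (\<Phi> v + K * a v - b v)))"
    proof (rule sum_mono)
      fix i assume i: "i \<in> {..<clen T v}"
      have "?q i * \<Phi> (v @ [i]) \<le> ?q i * (\<Phi> v + K * a v - b v)"
        by (rule mult_left_mono) (use i qn step[OF v, of i] in \<open>auto simp: algebra_simps\<close>)
      then show "?p v * (?q i * \<Phi> (v @ [i])) \<le> ?p v * (?q i * (\<Phi> v + K * a v - b v))"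
        by (rule mult_left_mono) (use pv in auto)
    qed
    also have "\<dots> = (\<Sum>i<clen T v. (?p v * (\<Phi> v + K * a v - b v)) * ?q i)"
      by (intro sum.cong refl) (simp add: algebra_simps)
    also have "\<dots> = ?p v * (\<Phi> v + K * a v - b v) * (\<Sum>i<clen T v. ?q i)"
      by (simp only: sum_distrib_left)
    also have "\<dots> = ?p v * (\<Phi> v + K * a v - b v)" using q1 by simp
    finally show ?thesis by (simp add: algebra_simps)
  qed
  have DS: "(\<Sum>v\<in>Dn T (Suc n). ?p v * \<Phi> v) = (\<Sum>v\<in>J. \<Sum>i<clen T v. ?p (v @ [i]) * \<Phi> (v @ [i]))"
  proof -
    have inj: "inj_on (\<lambda>(v,i). v @ [i]) (SIGMA v:J. {..<clen T v})"
      by (auto simp: inj_on_def)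
    have "(\<Sum>v\<in>Dn T (Suc n). ?p v * \<Phi> v) = (\<Sum>x\<in>(SIGMA v:J. {..<clen T v}). ?p (fst x @ [snd x]) * \<Phi> (fst x @ [snd x]))"
      unfolding Dn_Suc[OF ct] J_def[symmetric] by (subst sum.reindex[OF inj]) (auto simp: case_prod_beta)
    also have "\<dots> = (\<Sum>v\<in>J. \<Sum>i<clen T v. ?p (v @ [i]) * \<Phi> (v @ [i]))"
      using sum.Sigma[OF finJ, of "\<lambda>v. {..<clen T v}" "\<lambda>v i. ?p (v @ [i]) * \<Phi> (v @ [i])"]
      by (simp add: case_prod_beta)
    finally show ?thesis .
  qed
  have JD: "(\<Sum>v\<in>J. ?p v * \<Phi> v) \<le> (\<Sum>v\<in>Dn T n. ?p v * \<Phi> v)"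
    by (rule sum_mono2[OF finD]) (auto simp: J_def Dn_def pnn)
  have "(\<Sum>v\<in>In T (Suc n). ?p v * b v) + (\<Sum>v\<in>Dn T (Suc n). ?p v * \<Phi> v)
     = (\<Sum>v\<in>In T n. ?p v * b v) + (\<Sum>v\<in>J. (\<Sum>i<clen T v. ?p (v @ [i]) * \<Phi> (v @ [i])) + ?p v * b v)"
    unfolding In_Suc J_def[symmetric] DS using finI finJ disj
    by (simp add: sum.union_disjoint sum.distrib)
  also have "\<dots> \<le> (\<Sum>v\<in>In T n. ?p v * b v) + (\<Sum>v\<in>J. ?p v * \<Phi> v + K * (?p v * a v))"
    using child by (intro add_left_mono sum_mono) (auto simp: J_def)
  also have "\<dots> = (\<Sum>v\<in>In T n. ?p v * b v) + (\<Sum>v\<in>J. ?p v * \<Phi> v) + K * (\<Sum>v\<in>J. ?p v * a v)"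
    by (simp add: sum.distrib sum_distrib_left)
  also have "\<dots> \<le> (\<Sum>v\<in>In T n. ?p v * b v) + (\<Sum>v\<in>Dn T n. ?p v * \<Phi> v) + K * (\<Sum>v\<in>J. ?p v * a v)"
    using JD by simp
  also have "\<dots> \<le> \<Phi> [] + K * (\<Sum>v\<in>In T n. ?p v * a v) + K * (\<Sum>v\<in>J. ?p v * a v)"
    using Suc.IH by simp
  also have "\<dots> = \<Phi> [] + K * (\<Sum>v\<in>In T (Suc n). ?p v * a v)"
    unfolding In_Suc J_def[symmetric] using finI finJ disj
    by (simp add: sum.union_disjoint algebra_simps)
  finally show ?case .
qed

definition Aset :: "('f,'v) adp set \<Rightarrow> ('f,'v) ctree \<Rightarrow> nat list set" where
  "Aset S T = {v. ct_inner T v \<and> annot_at (ct_term T v) (ct_pos T v) \<and> ct_adp T v \<in> S}"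

lemma edl_Aset: "edl S T = (\<Sum>\<^sub>\<infinity>v\<in>Aset S T. ennreal (ct_prob T v))"
  unfolding edl_def Aset_def by simp

lemma edl_Un: "S1 \<inter> S2 = {} \<Longrightarrow> edl (S1 \<union> S2) T = edl S1 T + edl S2 T"
proof -
  assume d: "S1 \<inter> S2 = {}"
  have "Aset (S1 \<union> S2) T = Aset S1 T \<union> Aset S2 T" "Aset S1 T \<inter> Aset S2 T = {}"
    using d unfolding Aset_def by auto
  then show ?thesis unfolding edl_Aset by (simp add: infsum_Un_disjoint nonneg_summable_on_complete)
qed

lemma finite_le_infsum_ennreal:
  fixes f :: "'a \<Rightarrow> ennreal"
  shows "finite F \<Longrightarrow> F \<subseteq> A \<Longrightarrow> sum f F \<le> infsum f A"
  by (subst nonneg_infsum_complete) (auto intro: SUP_upper)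

lemma cnt_sharp: "cnt (sharp t) \<le> 1 + cnt t"
  by (cases t) auto

lemma cnt_zero_flat: "flat t = t \<Longrightarrow> cnt t = 0"
  by (metis cnt_flat)

definition Kc :: "('f,'v) adp set \<Rightarrow> nat" where
  "Kc P = (\<Sum>\<beta>\<in>P. sum_list (map (cnt \<circ> snd) (adp_rhs \<beta>)))"

lemma Kc_bound:
  assumes "finite P" "\<beta> \<in> P" "(p, r) \<in> set (adp_rhs \<beta>)"
  shows "cnt r \<le> Kc P"
proof -
  have "cnt r \<le> sum_list (map (cnt \<circ> snd) (adp_rhs \<beta>))"
    using assms(3) member_le_sum_list[of "cnt r" "map (cnt \<circ> snd) (adp_rhs \<beta>)"] by force
  also have "\<dots> \<le> Kc P" unfolding Kc_def
    by (rule member_le_sum[OF assms(2)]) (use assms(1) in auto)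
  finally show ?thesis .
qed

lemma edl_alpha_bound:
  assumes wf: "\<forall>\<beta>\<in>P. adp_ok \<Sigma> P \<beta>" and aS: "\<alpha> \<in> S" "S \<subseteq> P" and pre: "Pre P \<alpha> \<inter> S = {}"
    and finP: "finite P" and ct: "chain_tree P (sharp t) T" and ft: "flat t = t"
  shows "edl {\<alpha>} T \<le> 1 + of_nat (Kc P) * edl (P - S) T"
proof -
  let ?R = "Reach P \<alpha>"
  let ?p = "ct_prob T"
  define \<Phi> where "\<Phi> v = phi ?R (ct_term T v)" for v
  define a where "a v = (if annot_at (ct_term T v) (ct_pos T v) \<and> ct_adp T v \<notin> S then 1 else 0 :: real)" for v
  define b where "b v = (if annot_at (ct_term T v) (ct_pos T v) \<and> ct_adp T v = \<alpha> then 1 else 0 :: real)" for v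
  have inP: "ct_adp T v \<in> P" if "ct_inner T v" for v
    using ct_child(4)[OF ct that] unfolding step_ok_def by blast
  have probs: "\<And>v x. ct_inner T v \<Longrightarrow> x \<in> set (adp_rhs (ct_adp T v)) \<Longrightarrow> 0 \<le> fst x"
    using wf inP unfolding adp_ok_def by fastforce
  have psum: "\<And>v. ct_inner T v \<Longrightarrow> sum_list (map fst (adp_rhs (ct_adp T v))) = 1"
    using wf inP unfolding adp_ok_def by blast
  have step: "real (\<Phi> (v @ [i])) + b v \<le> real (\<Phi> v) + real (Kc P) * a v"
    if v: "ct_inner T v" and i: "i < clen T v" for v i
  proof -
    define pr where "pr = adp_rhs (ct_adp T v) ! i"
    have prin: "(fst pr, snd pr) \<in> set (adp_rhs (ct_adp T v))" using i unfolding pr_def clen_def by simp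
    have K: "cnt (snd pr) \<le> Kc P" using Kc_bound[OF finP inP[OF v] prin] .
    have "phi ?R (res_term (ct_term T v) (ct_pos T v) (ct_adp T v) (ct_sub T v) (snd pr)) +
        (if annot_at (ct_term T v) (ct_pos T v) \<and> ct_adp T v = \<alpha> then 1 else 0)
      \<le> phi ?R (ct_term T v) + (if annot_at (ct_term T v) (ct_pos T v) \<and> ct_adp T v \<notin> S then Kc P else 0)"
      by (rule step_phi[OF wf aS pre ct_child(4)[OF ct v] prin K])
    then have "real (\<Phi> (v @ [i]) + (if annot_at (ct_term T v) (ct_pos T v) \<and> ct_adp T v = \<alpha> then 1 else 0))
      \<le> real (\<Phi> v + (if annot_at (ct_term T v) (ct_pos T v) \<and> ct_adp T v \<notin> S then Kc P else 0))"
      unfolding \<Phi>_def ct_child(3)[OF ct v i] pr_def by linarith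
    then show ?thesis unfolding a_def b_def by (auto split: if_splits)
  qed
  have pnn: "\<And>v. v \<in> ct_nodes T \<Longrightarrow> 0 \<le> ?p v" by (rule ct_prob_nonneg[OF ct]) (use probs in auto)
  have TB: "(\<Sum>v\<in>In T n. ?p v * b v) \<le> 1 + real (Kc P) * (\<Sum>v\<in>In T n. ?p v * a v)" for n
  proof -
    have "(\<Sum>v\<in>In T n. ?p v * b v) + (\<Sum>v\<in>Dn T n. ?p v * \<Phi> v) \<le> \<Phi> [] + real (Kc P) * (\<Sum>v\<in>In T n. ?p v * a v)"
      by (rule tree_bound[OF ct probs psum step]) (auto simp: a_def)
    moreover have "0 \<le> (\<Sum>v\<in>Dn T n. ?p v * \<Phi> v)" using pnn by (intro sum_nonneg) (auto simp: Dn_def)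
    moreover have "\<Phi> [] \<le> (1::nat)"
    proof -
      have "ct_term T [] = sharp t" using ct unfolding chain_tree_def by simp
      then have "\<Phi> [] \<le> cnt (sharp t)" unfolding \<Phi>_def using phi_le_cnt by metis
      also have "\<dots> \<le> 1" using cnt_sharp[of t] cnt_zero_flat[OF ft] by simp
      finally show ?thesis .
    qed
    ultimately show ?thesis by linarith
  qed
  show ?thesis unfolding edl_Aset
  proof (rule infsum_le_finite_sums)
    show "(\<lambda>v. ennreal (?p v)) summable_on Aset {\<alpha>} T" by (rule nonneg_summable_on_complete) simp
    fix F assume F: "finite F" "F \<subseteq> Aset {\<alpha>} T"
    obtain n where n: "length ` F \<subseteq> {..<n}" using F(1) finite_nat_set_iff_bounded
      by (metis finite_imageI lessThan_iff subsetI)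
    have FI: "F \<subseteq> In T n" using F(2) n unfolding Aset_def In_def by auto
    have finI: "finite (In T n)" using In_finite[OF ct] .
    have "(\<Sum>v\<in>F. ennreal (?p v)) = ennreal (\<Sum>v\<in>F. ?p v)"
      using F FI pnn inner_nodes unfolding In_def by (intro sum_ennreal) blast
    also have "(\<Sum>v\<in>F. ?p v) = (\<Sum>v\<in>F. ?p v * b v)"
      using F(2) unfolding Aset_def b_def by (intro sum.cong) auto
    also have "\<dots> \<le> (\<Sum>v\<in>In T n. ?p v * b v)"
      by (rule sum_mono2[OF finI FI]) (auto simp: b_def In_def intro!: pnn inner_nodes)
    also have "\<dots> \<le> 1 + real (Kc P) * (\<Sum>v\<in>In T n. ?p v * a v)" by (rule TB)
    also have "(\<Sum>v\<in>In T n. ?p v * a v) = (\<Sum>v\<in>In T n \<inter> Aset (P - S) T. ?p v)"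
    proof -
      have "(\<Sum>v\<in>In T n. ?p v * a v) = (\<Sum>v\<in>In T n. if v \<in> Aset (P - S) T then ?p v else 0)"
        by (intro sum.cong refl) (auto simp: a_def Aset_def In_def inP)
      also have "\<dots> = (\<Sum>v\<in>In T n \<inter> Aset (P - S) T. ?p v)"
        using finI by (simp add: sum.If_cases)
      finally show ?thesis .
    qed
    finally have le: "(\<Sum>v\<in>F. ennreal (?p v)) \<le> ennreal (1 + real (Kc P) * (\<Sum>v\<in>In T n \<inter> Aset (P - S) T. ?p v))"
      by (simp add: ennreal_leI)
    have nn: "0 \<le> (\<Sum>v\<in>In T n \<inter> Aset (P - S) T. ?p v)"
      by (intro sum_nonneg pnn) (auto simp: In_def inner_nodes)
    have "ennreal (1 + real (Kc P) * (\<Sum>v\<in>In T n \<inter> Aset (P - S) T. ?p v))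
        = 1 + of_nat (Kc P) * (\<Sum>v\<in>In T n \<inter> Aset (P - S) T. ennreal (?p v))"
    proof -
      have "(\<Sum>v\<in>In T n \<inter> Aset (P - S) T. ennreal (?p v)) = ennreal (\<Sum>v\<in>In T n \<inter> Aset (P - S) T. ?p v)"
        by (rule sum_ennreal) (auto simp: In_def intro: pnn inner_nodes)
      then show ?thesis using nn by (simp add: ennreal_mult ennreal_of_nat_eq_real_of_nat)
    qed
    also have "\<dots> \<le> 1 + of_nat (Kc P) * (\<Sum>\<^sub>\<infinity>v\<in>Aset (P - S) T. ennreal (?p v))"
      using finI by (intro add_left_mono mult_left_mono finite_le_infsum_ennreal) auto
    finally show "(\<Sum>v\<in>F. ennreal (?p v)) \<le> 1 + of_nat (Kc P) * (\<Sum>\<^sub>\<infinity>v\<in>Aset (P - S) T. ennreal (?p v))"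
      using le by simp
  qed
qed

lemma edl_le_edh: "chain_tree (fst PS) (sharp t) T \<Longrightarrow> edl (snd PS) T \<le> edh PS t"
  unfolding edh_def by (rule Sup_upper) blast

lemma edh_le_rc: "basic \<Sigma> (fst PS) t \<Longrightarrow> tsize t \<le> n \<Longrightarrow> edh PS t \<le> rc_fun \<Sigma> PS n"
  unfolding rc_fun_def by (rule Sup_upper) blast

lemma rc_bounds:
  assumes wf: "\<forall>\<beta>\<in>P. adp_ok \<Sigma> P \<beta>" and aS: "\<alpha> \<in> S" "S \<subseteq> P" and pre: "Pre P \<alpha> \<inter> S = {}"
    and finP: "finite P"
  shows "rc_fun \<Sigma> (P, S) n \<le> rc_fun \<Sigma> (P, S - {\<alpha>}) n + 1 + of_nat (Kc P) * rc_fun \<Sigma> (P, P - S) n"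
    and "rc_fun \<Sigma> (P, P - (S - {\<alpha>})) n \<le> rc_fun \<Sigma> (P, P - S) n + 1 + of_nat (Kc P) * rc_fun \<Sigma> (P, P - S) n"
proof -
  let ?K = "of_nat (Kc P) :: ennreal"
  have e1: "S = (S - {\<alpha>}) \<union> {\<alpha>}" "(S - {\<alpha>}) \<inter> {\<alpha>} = {}" using aS by auto
  have e2: "P - (S - {\<alpha>}) = (P - S) \<union> {\<alpha>}" "(P - S) \<inter> {\<alpha>} = {}" using aS by auto
  have T1: "edl S T \<le> rc_fun \<Sigma> (P, S - {\<alpha>}) n + 1 + ?K * rc_fun \<Sigma> (P, P - S) n"
    and T2: "edl (P - (S - {\<alpha>})) T \<le> rc_fun \<Sigma> (P, P - S) n + 1 + ?K * rc_fun \<Sigma> (P, P - S) n"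
    if ct: "chain_tree P (sharp t) T" and b: "basic \<Sigma> P t" and sz: "tsize t \<le> n" for t T
  proof -
    have ft: "flat t = t" using b unfolding basic_def by blast
    have A: "edl {\<alpha>} T \<le> 1 + ?K * edl (P - S) T" by (rule edl_alpha_bound[OF wf aS pre finP ct ft])
    have r1: "edl (S - {\<alpha>}) T \<le> rc_fun \<Sigma> (P, S - {\<alpha>}) n"
      using order_trans[OF edl_le_edh[of "(P, S - {\<alpha>})" t T] edh_le_rc[of \<Sigma> "(P, S - {\<alpha>})" t n]] ct b sz by simp
    have r2: "edl (P - S) T \<le> rc_fun \<Sigma> (P, P - S) n"
      using order_trans[OF edl_le_edh[of "(P, P - S)" t T] edh_le_rc[of \<Sigma> "(P, P - S)" t n]] ct b sz by simp
    have A': "edl {\<alpha>} T \<le> 1 + ?K * rc_fun \<Sigma> (P, P - S) n"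
      using A r2 by (meson add_left_mono mult_left_mono order_trans zero_le)
    have "edl S T = edl (S - {\<alpha>}) T + edl {\<alpha>} T" using edl_Un[OF e1(2)] e1(1) by metis
    also have "\<dots> \<le> rc_fun \<Sigma> (P, S - {\<alpha>}) n + (1 + ?K * rc_fun \<Sigma> (P, P - S) n)"
      using r1 A' by (rule add_mono)
    finally show "edl S T \<le> rc_fun \<Sigma> (P, S - {\<alpha>}) n + 1 + ?K * rc_fun \<Sigma> (P, P - S) n"
      by (simp add: add.assoc)
    have "edl (P - (S - {\<alpha>})) T = edl (P - S) T + edl {\<alpha>} T" using edl_Un[OF e2(2)] e2(1) by metis
    also have "\<dots> \<le> rc_fun \<Sigma> (P, P - S) n + (1 + ?K * rc_fun \<Sigma> (P, P - S) n)"
      using r2 A' by (rule add_mono)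
    finally show "edl (P - (S - {\<alpha>})) T \<le> rc_fun \<Sigma> (P, P - S) n + 1 + ?K * rc_fun \<Sigma> (P, P - S) n"
      by (simp add: add.assoc)
  qed
  show "rc_fun \<Sigma> (P, S) n \<le> rc_fun \<Sigma> (P, S - {\<alpha>}) n + 1 + ?K * rc_fun \<Sigma> (P, P - S) n"
    unfolding rc_fun_def[of \<Sigma> "(P, S)"] edh_def
    by (rule Sup_least, clarsimp, rule Sup_least, clarsimp) (use T1 in blast)
  show "rc_fun \<Sigma> (P, P - (S - {\<alpha>})) n \<le> rc_fun \<Sigma> (P, P - S) n + 1 + ?K * rc_fun \<Sigma> (P, P - S) n"
    unfolding rc_fun_def[of \<Sigma> "(P, P - (S - {\<alpha>}))"] edh_def
    by (rule Sup_least, clarsimp, rule Sup_least, clarsimp) (use T2 in blast)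
qed

lemma bigO_mono:
  assumes "bigO g \<phi>" "\<And>n. n \<ge> M \<Longrightarrow> 0 \<le> \<phi> n \<and> \<phi> n \<le> \<psi> n"
  shows "bigO g \<psi>"
proof -
  obtain c N where cN: "\<forall>n\<ge>N. g n \<le> ennreal (c * \<phi> n)" using assms(1) unfolding bigO_def by blast
  have "g n \<le> ennreal (max c 0 * \<psi> n)" if "n \<ge> max N M" for n
  proof -
    have "g n \<le> ennreal (c * \<phi> n)" using cN that by auto
    also have "\<dots> \<le> ennreal (max c 0 * \<psi> n)"
      using assms(2)[of n] that by (intro ennreal_leI) (auto intro: mult_mono mult_right_mono)
    finally show ?thesis .
  qed
  then show ?thesis unfolding bigO_def by blast
qed

lemma bigO_comb:
  fixes f g h :: "nat \<Rightarrow> ennreal"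
  assumes "bigO g \<phi>" "bigO h \<phi>" "\<And>n. n \<ge> M \<Longrightarrow> 1 \<le> \<phi> n"
    and le: "\<And>n. f n \<le> g n + 1 + of_nat K * h n"
  shows "bigO f \<phi>"
proof -
  obtain c1 N1 where 1: "\<forall>n\<ge>N1. g n \<le> ennreal (c1 * \<phi> n)" using assms(1) unfolding bigO_def by blast
  obtain c2 N2 where 2: "\<forall>n\<ge>N2. h n \<le> ennreal (c2 * \<phi> n)" using assms(2) unfolding bigO_def by blast
  define C where "C = max c1 0 + 1 + real K * max c2 0"
  have "f n \<le> ennreal (C * \<phi> n)" if n: "n \<ge> max (max N1 N2) M" for n
  proof -
    have ph: "1 \<le> \<phi> n" using assms(3) n by auto
    have a: "g n \<le> ennreal (max c1 0 * \<phi> n)"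
    proof -
      have "g n \<le> ennreal (c1 * \<phi> n)" using 1 n by auto
      also have "\<dots> \<le> ennreal (max c1 0 * \<phi> n)" using ph by (intro ennreal_leI mult_right_mono) auto
      finally show ?thesis .
    qed
    have b: "h n \<le> ennreal (max c2 0 * \<phi> n)"
    proof -
      have "h n \<le> ennreal (c2 * \<phi> n)" using 2 n by auto
      also have "\<dots> \<le> ennreal (max c2 0 * \<phi> n)" using ph by (intro ennreal_leI mult_right_mono) auto
      finally show ?thesis .
    qed
    have one: "(1::ennreal) \<le> ennreal (\<phi> n)" using ph ennreal_leI by fastforce
    have "f n \<le> g n + 1 + of_nat K * h n" by (rule le)
    also have "\<dots> \<le> ennreal (max c1 0 * \<phi> n) + ennreal (\<phi> n) + of_nat K * ennreal (max c2 0 * \<phi> n)"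
      by (intro add_mono a one mult_left_mono b) auto
    finally have "f n \<le> ennreal (max c1 0 * \<phi> n) + ennreal (\<phi> n) + of_nat K * ennreal (max c2 0 * \<phi> n)" .
    also have "\<dots> = ennreal (C * \<phi> n)"
      using ph unfolding C_def
      by (simp add: ennreal_of_nat_eq_real_of_nat ennreal_mult[symmetric] ennreal_plus[symmetric] algebra_simps del: ennreal_plus)
    finally show ?thesis .
  qed
  then show ?thesis unfolding bigO_def by blast
qed

lemma bigO_fin:
  assumes "mono g" "bigO g \<phi>"
  shows "g n \<noteq> \<infinity>"
proof -
  obtain c N where cN: "\<forall>n\<ge>N. g n \<le> ennreal (c * \<phi> n)" using assms(2) unfolding bigO_def by blast
  have "g n \<le> g (max n N)" using assms(1) by (simp add: monoD)
  also have "\<dots> \<le> ennreal (c * \<phi> (max n N))" using cN by auto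
  finally show ?thesis by (auto simp: top_unique)
qed

lemma iota_le_Pol: "bigO f (\<lambda>n. real n ^ a) \<Longrightarrow> iota f \<le> Pol a"
  unfolding iota_def by (auto simp: less_eq_cplx_def intro: Least_le)

lemma iota_le_Exp: "bigO f (\<lambda>n. 2 ^ (n ^ k)) \<Longrightarrow> iota f \<le> Exp"
  unfolding iota_def by (auto simp: less_eq_cplx_def)

lemma iota_le_Exp2: "bigO f (\<lambda>n. 2 ^ (2 ^ (n ^ k))) \<Longrightarrow> iota f \<le> Exp2"
  unfolding iota_def by (auto simp: less_eq_cplx_def)

lemma iota_le_Fin: "\<forall>n. f n \<noteq> \<infinity> \<Longrightarrow> iota f \<le> Fin"
  unfolding iota_def by (auto simp: less_eq_cplx_def)

lemma iota_PolD: "iota g = Pol a \<Longrightarrow> bigO g (\<lambda>n. real n ^ a)"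
  unfolding iota_def by (auto split: if_splits intro: LeastI_ex)

lemma iota_ExpD: "iota g = Exp \<Longrightarrow> \<exists>k. bigO g (\<lambda>n. 2 ^ (n ^ k))"
  unfolding iota_def by (auto split: if_splits)

lemma iota_Exp2D: "iota g = Exp2 \<Longrightarrow> \<exists>k. bigO g (\<lambda>n. 2 ^ (2 ^ (n ^ k)))"
  unfolding iota_def by (auto split: if_splits)

lemma iota_FinD: "iota g = Fin \<Longrightarrow> g n \<noteq> \<infinity>"
  unfolding iota_def by (auto split: if_splits)

lemma pol_to_exp: "bigO g (\<lambda>n. real n ^ a) \<Longrightarrow> bigO g (\<lambda>n. 2 ^ (n ^ a))"
proof (rule bigO_mono[where M=0])
  fix n :: nat
  have "real n ^ a = real (n ^ a)" by simp
  also have "\<dots> \<le> real ((2::nat) ^ (n ^ a))" using less_exp[of "n ^ a"] by linarith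
  finally show "0 \<le> real n ^ a \<and> real n ^ a \<le> 2 ^ (n ^ a)" by simp
qed

lemma exp_to_exp2: "bigO g (\<lambda>n. 2 ^ (n ^ k)) \<Longrightarrow> bigO g (\<lambda>n. 2 ^ (2 ^ (n ^ k)))"
proof (rule bigO_mono[where M=0])
  fix n :: nat
  have "(2::real) ^ (n ^ k) = real ((2::nat) ^ (n ^ k))" by simp
  also have "\<dots> \<le> real ((2::nat) ^ (2 ^ (n ^ k)))" using less_exp[of "2 ^ (n ^ k)"] by linarith
  finally show "0 \<le> (2::real) ^ (n ^ k) \<and> (2::real) ^ (n ^ k) \<le> 2 ^ (2 ^ (n ^ k))" by simp
qed

lemma cplx_le_Pol: "x \<le> Pol a \<Longrightarrow> \<exists>a'. a' \<le> a \<and> x = Pol a'"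
  by (cases x) (auto simp: less_eq_cplx_def)

lemma cplx_le_Exp: "x \<le> Exp \<Longrightarrow> x = Exp \<or> (\<exists>a. x = Pol a)"
  by (cases x) (auto simp: less_eq_cplx_def)

lemma cplx_le_Exp2: "x \<le> Exp2 \<Longrightarrow> x = Exp2 \<or> x = Exp \<or> (\<exists>a. x = Pol a)"
  by (cases x) (auto simp: less_eq_cplx_def)

lemma cplx_le_Fin: "x \<le> Fin \<Longrightarrow> x \<noteq> Omega"
  by (cases x) (auto simp: less_eq_cplx_def)

lemma cplx_Omega_top: "x \<le> Omega"
  by (cases x) (auto simp: less_eq_cplx_def)

lemma PolD': "iota g \<le> Pol a \<Longrightarrow> bigO g (\<lambda>n. real n ^ a)"
proof -
  assume "iota g \<le> Pol a"
  then obtain a' where a': "a' \<le> a" "iota g = Pol a'" using cplx_le_Pol by blast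
  show ?thesis
  proof (rule bigO_mono[OF iota_PolD[OF a'(2)], where M=1])
    fix n :: nat assume "1 \<le> n"
    then show "0 \<le> real n ^ a' \<and> real n ^ a' \<le> real n ^ a" using a'(1) by (auto intro: power_increasing)
  qed
qed

lemma ExpD': "iota g \<le> Exp \<Longrightarrow> \<exists>k. bigO g (\<lambda>n. 2 ^ (n ^ k))"
  using cplx_le_Exp iota_ExpD iota_PolD pol_to_exp by metis

lemma Exp2D': "iota g \<le> Exp2 \<Longrightarrow> \<exists>k. bigO g (\<lambda>n. 2 ^ (2 ^ (n ^ k)))"
  using cplx_le_Exp2 iota_Exp2D iota_ExpD iota_PolD pol_to_exp exp_to_exp2 by metis

lemma FinD': "mono g \<Longrightarrow> iota g \<le> Fin \<Longrightarrow> g n \<noteq> \<infinity>"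
proof -
  assume m: "mono g" and le: "iota g \<le> Fin"
  show ?thesis
  proof (cases "iota g = Fin")
    case True then show ?thesis using iota_FinD by blast
  next
    case False
    then have "iota g \<le> Exp2" using le by (cases "iota g") (auto simp: less_eq_cplx_def)
    then show ?thesis using Exp2D' bigO_fin[OF m] by blast
  qed
qed

lemma exp_k_mono: "k1 \<le> k \<Longrightarrow> 1 \<le> n \<Longrightarrow> (2::real) ^ (n ^ k1) \<le> 2 ^ (n ^ k)"
  by (intro power_increasing) (auto intro: power_increasing)

lemma exp2_k_mono: "k1 \<le> k \<Longrightarrow> 1 \<le> n \<Longrightarrow> (2::real) ^ (2 ^ (n ^ k1)) \<le> 2 ^ (2 ^ (n ^ k))"
  by (intro power_increasing) (auto intro: power_increasing)

lemma iota_comb: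
  fixes f g h :: "nat \<Rightarrow> ennreal"
  assumes mg: "mono g" and mh: "mono h" and le: "\<And>n. f n \<le> g n + 1 + of_nat K * h n"
    and X: "iota g \<le> X" "iota h \<le> X"
  shows "iota f \<le> X"
proof (cases X)
  case (Pol a)
  have "bigO f (\<lambda>n. real n ^ a)"
    by (rule bigO_comb[OF PolD'[OF X(1)[unfolded Pol]] PolD'[OF X(2)[unfolded Pol]], where M=1 and K=K])
      (auto intro: le one_le_power)
  then show ?thesis using Pol iota_le_Pol by blast
next
  case Exp
  obtain k1 k2 where k: "bigO g (\<lambda>n. 2 ^ (n ^ k1))" "bigO h (\<lambda>n. 2 ^ (n ^ k2))"
    using ExpD' X Exp by metis
  have g: "bigO g (\<lambda>n. 2 ^ (n ^ max k1 k2))"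
    by (rule bigO_mono[OF k(1), where M=1]) (auto intro!: power_increasing)
  have h: "bigO h (\<lambda>n. 2 ^ (n ^ max k1 k2))"
    by (rule bigO_mono[OF k(2), where M=1]) (auto intro!: power_increasing)
  have "bigO f (\<lambda>n. 2 ^ (n ^ max k1 k2))"
    by (rule bigO_comb[OF g h, where M=1 and K=K]) (auto intro: le one_le_power)
  then show ?thesis using Exp iota_le_Exp by blast
next
  case Exp2
  obtain k1 k2 where k: "bigO g (\<lambda>n. 2 ^ (2 ^ (n ^ k1)))" "bigO h (\<lambda>n. 2 ^ (2 ^ (n ^ k2)))"
    using Exp2D' X Exp2 by metis
  have g: "bigO g (\<lambda>n. 2 ^ (2 ^ (n ^ max k1 k2)))"
    by (rule bigO_mono[OF k(1), where M=1]) (auto intro!: power_increasing)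
  have h: "bigO h (\<lambda>n. 2 ^ (2 ^ (n ^ max k1 k2)))"
    by (rule bigO_mono[OF k(2), where M=1]) (auto intro!: power_increasing)
  have "bigO f (\<lambda>n. 2 ^ (2 ^ (n ^ max k1 k2)))"
    by (rule bigO_comb[OF g h, where M=1 and K=K]) (auto intro: le one_le_power)
  then show ?thesis using Exp2 iota_le_Exp2 by blast
next
  case Fin
  have "f n \<noteq> \<infinity>" for n
  proof -
    have "g n \<noteq> \<infinity>" "h n \<noteq> \<infinity>" using FinD'[OF mg] FinD'[OF mh] X Fin by auto
    then have "g n + 1 + of_nat K * h n \<noteq> \<infinity>" by (simp add: ennreal_mult_eq_top_iff)
    then show ?thesis using le[of n] by (auto simp: top_unique)
  qed
  then show ?thesis using Fin iota_le_Fin by blast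
next
  case Omega
  then show ?thesis using cplx_Omega_top by simp
qed

lemma rc_mono: "mono (rc_fun \<Sigma> PS)"
  unfolding mono_def rc_fun_def by (auto intro!: Sup_subset_mono)

theorem mainTheorem8:
  fixes \<Sigma> :: "('f \<times> nat) set" and P S :: "('f,'v) adp set" and \<alpha> :: "('f,'v) adp"
  assumes "finite \<Sigma>"
    and "infinite (UNIV :: 'v set)"
    and "is_adp_problem \<Sigma> (P, S)"
    and "\<alpha> \<in> S"
    and "Pre P \<alpha> \<inter> S = {}"
  shows "sound_output \<Sigma> (P, S) (Pol 0) [(P, S - {\<alpha>})]"
proof -
  have finP: "finite P" and SP: "S \<subseteq> P" and wf: "\<forall>\<beta>\<in>P. adp_ok \<Sigma> P \<beta>"
    using assms(3) unfolding is_adp_problem_def by auto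
  have aS: "\<alpha> \<in> S" "S \<subseteq> P" using assms(4) SP by auto
  note B = rc_bounds[OF wf aS assms(5) finP]
  show ?thesis unfolding sound_output_def
  proof (intro allI impI)
    fix T p T'
    assume H: "proof_tree \<Sigma> T \<and> well_formed \<Sigma> T \<and> pt_at T p = Some T' \<and> pt_prob T' = (P, S)"
    have pre: "iota_prob \<Sigma> (P, P - S) \<le> pt_prefix T p"
      using H unfolding well_formed_def by fastforce
    let ?X = "max (pt_prefix T p) (Pol 0)"
    have 1: "iota_prob \<Sigma> (P, S) \<le> max (iota_prob \<Sigma> (P, S - {\<alpha>})) ?X"
      unfolding iota_prob_def
      by (rule iota_comb[OF rc_mono rc_mono, where K="Kc P"])
         (use B(1) pre in \<open>auto simp: iota_prob_def le_max_iff_disj\<close>)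
    have 2: "iota_prob \<Sigma> (P, P - (S - {\<alpha>})) \<le> ?X"
      unfolding iota_prob_def
      by (rule iota_comb[OF rc_mono rc_mono, where K="Kc P"])
         (use B(2) pre in \<open>auto simp: iota_prob_def le_max_iff_disj\<close>)
    show "iota_prob \<Sigma> (P, S) \<le> fold max (map (iota_prob \<Sigma>) [(P, S - {\<alpha>})]) (max (pt_prefix T p) (Pol 0)) \<and>
       (\<forall>(Pi, Si)\<in>set [(P, S - {\<alpha>})]. iota_prob \<Sigma> (Pi, Pi - Si) \<le> max (pt_prefix T p) (Pol 0))"
      using 1 2 by simp
  qed
qed

end
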